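(* Let $m\geq 11$ and $k\geq 1$ be integers and let $c(x)=1+\sum_{j\in\{1,3,4,5\}}(x^j+x^{m-j})\in\mathbb{F}_2[x]$. Then $\gcd(c(x^k),x^m-1)=1$ if and only if $\gcd(m,3k)=\gcd(m,k)$.
   Context: All polynomials are over $\mathbb{F}_2$. *)

theory Defs
  imports "HOL-Computational_Algebra.Computational_Algebra" "Berlekamp_Zassenhaus.Finite_Field"
begin

text \<open>F_2 is rendered as the finite field bool mod_ring (integers modulo CARD(bool) = 2).\<close>

type_synonym gf2 = "bool mod_ring"

definition c_poly :: "nat \<Rightarrow> gf2 poly" where
  "c_poly m = 1 + (\<Sum>j\<in>{1,3,4,5::nat}. Polynomial.monom 1 j + Polynomial.monom 1 (m - j))"

end

theory Submission imports Defs begin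

lemma two_gf2': "(2::gf2) = 0"
  using of_nat_card_eq_0[where 'a=bool] by simp
lemma two_gf2: "(2::gf2 poly) = 0"
proof -
  have "(2::gf2 poly) = [:2:]" by (rule numeral_poly)
  then show ?thesis by (simp only: two_gf2' pCons_0_0)
qed
lemma three_gf2: "(3::gf2 poly) = 1"
proof - have "(3::gf2 poly) = 2 + 1" by simp then show ?thesis using two_gf2 by simp qed

lemma pow_sub1_dvd: "(a - 1) dvd (a ^ n - (1::'a::comm_ring_1))"
proof (induction n)
  case 0 then show ?case by simp
next
  case (Suc n)
  have "a ^ Suc n - 1 = a * (a ^ n - 1) + (a - 1)" by (simp add: algebra_simps)
  then show ?case by (metis Suc dvd_add dvd_mult dvd_refl)
qed

lemma xpow_dvd: "d dvd e \<Longrightarrow> (x ^ d - 1) dvd (x ^ e - (1::'a::comm_ring_1))"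
  using pow_sub1_dvd[of "x^d" "e div d"] by (simp add: power_mult[symmetric])

lemma xpow_gcd:
  fixes p x :: "'a::comm_ring_1"
  assumes "p dvd x ^ a - 1" "p dvd x ^ b - 1"
  shows "p dvd x ^ gcd a b - 1"
proof (cases "a = 0")
  case True then show ?thesis using assms by simp
next
  case False
  then obtain s t where st: "a * s = b * t + gcd a b" using bezout_nat by blast
  have 1: "p dvd x ^ (a*s) - 1" using assms(1) xpow_dvd[of a "a*s" x] dvd_trans by auto
  have 2: "p dvd x ^ (b*t) - 1" using assms(2) xpow_dvd[of b "b*t" x] dvd_trans by auto
  have "x ^ gcd a b - 1 = (x ^ (a*s) - 1) - (x ^ (b*t) - 1) * x ^ gcd a b"
    by (simp add: st power_add algebra_simps)
  then show ?thesis using 1 2 by (metis dvd_diff dvd_mult2)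
qed

lemma mX: "Polynomial.monom (1::'a::comm_semiring_1) n = [:0,1:] ^ n"
  by (simp add: monom_altdef)

lemma deg_xr: "degree ([:0,1:]^r - (1::'a::field poly)) \<le> r"
  using degree_diff_le[of "[:0,1:]^r" r "1::'a poly"] by (simp add: degree_linear_power)

lemma xr_nz: "0 < r \<Longrightarrow> [:0,1:]^r - (1::'a::field poly) \<noteq> 0"
proof
  assume "0 < r" "[:0,1:]^r - (1::'a poly) = 0"
  then have "Polynomial.coeff ([:0,1:]^r - (1::'a poly)) r = 0" by simp
  then show False using \<open>0<r\<close> by (simp add: mX[symmetric] coeff_monom)
qed

lemma deg_xr_eq: "0 < r \<Longrightarrow> degree ([:0,1:]^r - (1::'a::field poly)) = r"
proof -
  assume r: "0 < r"
  have "Polynomial.coeff ([:0,1:]^r - (1::'a poly)) r \<noteq> 0" using r by (simp add: mX[symmetric] coeff_monom)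
  then have "r \<le> degree ([:0,1:]^r - (1::'a poly))" by (rule le_degree)
  then show ?thesis using deg_xr[of r] by (metis le_antisym)
qed

lemma xdvd_imp_dvd:
  assumes g: "0 < g" and d: "([:0,1:]^g - 1) dvd ([:0,1:]^k - (1::'a::field poly))"
  shows "g dvd k"
proof (rule ccontr)
  assume nd: "\<not> g dvd k"
  define r where "r = k mod g"
  define q where "q = k div g"
  have r: "0 < r" "r < g" using nd g by (auto simp: r_def mod_less_divisor dvd_eq_mod_eq_0)
  have k: "k = g * q + r" by (simp add: r_def q_def)
  let ?X = "[:0,1:] :: 'a poly"
  have eq: "?X^r - 1 = (?X^k - 1) - ?X^r * (?X^(g*q) - 1)" by (simp add: k power_add algebra_simps)
  have d2: "(?X^g - 1) dvd (?X^(g*q) - 1)" by (rule xpow_dvd) simp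
  have "(?X^g - 1) dvd (?X^k - 1) - ?X^r * (?X^(g*q) - 1)"
    by (rule dvd_diff[OF d dvd_mult[OF d2]])
  then have "(?X^g - 1) dvd (?X^r - 1)" by (simp only: eq)
  then have "degree (?X^g - 1) \<le> degree (?X^r - 1)"
    using xr_nz[OF r(1)] by (rule dvd_imp_degree_le)
  then show False using deg_xr_eq[OF g, where 'a='a] deg_xr_eq[OF r(1), where 'a='a] r by linarith
qed

lemma coprime_shift:
  fixes a b q :: "gf2 poly"
  assumes "q dvd a - b"
  shows "coprime a q \<longleftrightarrow> coprime b q"
proof
  assume c: "coprime a q"
  show "coprime b q"
  proof (rule coprimeI)
    fix e assume eb: "e dvd b" and eq: "e dvd q"
    have "e dvd (a - b) + b" by (rule dvd_add[OF dvd_trans[OF eq assms] eb])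
    then have "e dvd a" by simp
    then show "is_unit e" using c \<open>e dvd q\<close> coprime_common_divisor by blast
  qed
next
  assume c: "coprime b q"
  show "coprime a q"
  proof (rule coprimeI)
    fix e assume ea: "e dvd a" and eq: "e dvd q"
    have "e dvd a - (a - b)" by (rule dvd_diff[OF ea dvd_trans[OF eq assms]])
    then have "e dvd b" by simp
    then show "is_unit e" using c \<open>e dvd q\<close> coprime_common_divisor by blast
  qed
qed

lemma B_lemma:
  fixes m k :: nat
  assumes m: "0 < m"
  defines "t \<equiv> ([:0,1:] :: gf2 poly) ^ k"
  shows "coprime (1 + t + t^2) ([:0,1:]^m - 1) \<longleftrightarrow> gcd m (3 * k) = gcd m k"
proof -
  let ?X = "[:0,1:] :: gf2 poly"
  let ?B = "1 + t + t^2"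
  have AB: "(t - 1) * ?B = ?X^(3*k) - 1"
    by (simp add: t_def power_mult[symmetric] mult.commute[of k] algebra_simps power2_eq_square numeral_3_eq_3 power_add)
  show ?thesis
  proof
    assume c: "coprime ?B (?X^m - 1)"
    define g where "g = gcd m (3*k)"
    have g0: "0 < g" using m by (simp add: g_def)
    have hg: "(?X^g - 1) dvd (?X^m - 1)" by (rule xpow_dvd) (simp add: g_def)
    have c2: "coprime (?X^g - 1) ?B"
    proof (rule coprimeI)
      fix e assume e1: "e dvd ?X^g - 1" and e2: "e dvd ?B"
      have "e dvd ?X^m - 1" by (rule dvd_trans[OF e1 hg])
      then show "is_unit e" using c e2 coprime_common_divisor by blast
    qed
    have "(?X^g - 1) dvd (?X^(3*k) - 1)" by (rule xpow_dvd) (simp add: g_def)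
    then have "(?X^g - 1) dvd (t - 1) * ?B" using AB by simp
    then have "(?X^g - 1) dvd (?X^k - 1)" using c2 coprime_dvd_mult_left_iff t_def by blast
    then have "g dvd k" using g0 xdvd_imp_dvd by blast
    then have "g dvd gcd m k" by (simp add: g_def)
    moreover have "gcd m k dvd g" by (simp add: g_def)
    ultimately show "gcd m (3 * k) = gcd m k" using g_def by (simp add: dvd_antisym)
  next
    assume e: "gcd m (3 * k) = gcd m k"
    show "coprime ?B (?X^m - 1)"
    proof (rule coprimeI)
      fix d assume d1: "d dvd ?B" and d2: "d dvd ?X^m - 1"
      have "d dvd (t - 1) * ?B" by (rule dvd_mult[OF d1])
      then have "d dvd ?X^(3*k) - 1" by (simp only: AB)
      then have "d dvd ?X^(gcd (3*k) m) - 1" using d2 xpow_gcd by blast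
      then have "d dvd ?X^(gcd m k) - 1" using e by (simp add: gcd.commute)
      moreover have "(?X^(gcd m k) - 1) dvd (?X^k - 1)" by (rule xpow_dvd) simp
      ultimately have dt: "d dvd t - 1" unfolding t_def using dvd_trans by blast
      have dt2: "d dvd t^2 - 1" using dt pow_sub1_dvd[of t 2] dvd_trans by blast
      have "?B = (t - 1) + (t^2 - 1) + 3" by (simp add: algebra_simps)
      then have "?B = (t - 1) + (t^2 - 1) + 1" using three_gf2 by simp
      then have B1: "?B - (t - 1) - (t^2 - 1) = 1" by simp
      have "d dvd ?B - (t - 1) - (t^2 - 1)" by (intro dvd_diff d1 dt dt2)
      then have "d dvd 1" by (simp only: B1)
      then show "is_unit d" by simp
    qed
  qed
qed

lemma ring_id: fixes t u :: "'a::comm_ring_1"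
  shows "t^5*(1+t+t^3+t^4+t^5 + u*(t^4+t^2+t+1)) - (1+t+t^2)^5 =
   (u*t^5 - 1)*(1+t+t^2+t^4) - 2*(2*t+7*t^2+15*t^3+22*t^4+25*t^5+22*t^6+15*t^7+7*t^8+2*t^9)"
  by (simp add: eval_nat_numeral algebra_simps)

lemma pcomp_X: "pcompose ([:0,1:]^j) q = (q::'a::comm_ring_1 poly)^j"
  by (induction j) (simp_all add: pcompose_mult pcompose_1 pcompose_pCons)

lemma C_form:
  fixes m k n :: nat
  assumes "m = n + 5"
  defines "t \<equiv> ([:0,1:] :: gf2 poly) ^ k"
  shows "pcompose (c_poly m) (Polynomial.monom 1 k) = 1+t+t^3+t^4+t^5 + t^n*(t^4+t^2+t+1)"
proof -
  have e: "pcompose (Polynomial.monom 1 j) (Polynomial.monom 1 k) = t^j" for j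
    by (simp add: mX pcomp_X t_def)
  show ?thesis
    unfolding c_poly_def pcompose_add pcompose_1 pcompose_sum e
    by (simp add: assms(1) power_add algebra_simps power2_eq_square)
qed

theorem proposition3:
  fixes m k :: nat
  assumes "m \<ge> 11" and "k \<ge> 1"
  shows "gcd (pcompose (c_poly m) (Polynomial.monom 1 k)) (Polynomial.monom 1 m - 1) = 1
           \<longleftrightarrow> gcd m (3 * k) = gcd m k"
proof -
  let ?X = "[:0,1:] :: gf2 poly"
  define t where "t = ?X ^ k"
  define n where "n = m - 5"
  have mn: "m = n + 5" using assms(1) by (simp add: n_def)
  define C where "C = pcompose (c_poly m) (Polynomial.monom 1 k)"
  define Q where "Q = ?X^m - 1"
  have Cf: "C = 1+t+t^3+t^4+t^5 + t^n*(t^4+t^2+t+1)"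
    unfolding C_def t_def by (rule C_form[OF mn])
  have cX: "coprime ?X Q"
  proof (rule coprimeI)
    fix d assume d1: "d dvd ?X" and d2: "d dvd Q"
    have "?X dvd ?X^m" by (rule dvd_power) (use assms(1) in simp)
    then have "d dvd ?X^m" using d1 by (rule dvd_trans[rotated])
    then have "d dvd ?X^m - Q" using d2 by (rule dvd_diff)
    moreover have "?X^m - Q = 1" by (simp add: Q_def)
    ultimately show "is_unit d" by simp
  qed
  have ct: "coprime (t^5) Q" unfolding t_def power_mult[symmetric] coprime_power_left_iff
    using cX by (rule disjI1)
  have "t^5*C - (1+t+t^2)^5 = (t^n*t^5 - 1)*(1+t+t^2+t^4) - 2*(2*t+7*t^2+15*t^3+22*t^4+25*t^5+22*t^6+15*t^7+7*t^8+2*t^9)"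
    unfolding Cf by (rule ring_id)
  also have "\<dots> = (?X^(m*k) - 1)*(1+t+t^2+t^4)"
  proof -
    have e1: "t^n*t^5 = ?X^(m*k)" by (simp add: t_def mn flip: power_add power_mult) (simp add: mult.commute add_mult_distrib2)
    show ?thesis by (simp only: e1 two_gf2 mult_zero_left diff_zero)
  qed
  finally have eq: "t^5*C - (1+t+t^2)^5 = (?X^(m*k) - 1)*(1+t+t^2+t^4)" .
  have "Q dvd ?X^(m*k) - 1" unfolding Q_def by (rule xpow_dvd) simp
  then have "Q dvd (?X^(m*k) - 1)*(1+t+t^2+t^4)" by (rule dvd_mult2)
  then have Qd: "Q dvd t^5*C - (1+t+t^2)^5" by (simp only: eq)
  have "gcd C Q = 1 \<longleftrightarrow> coprime C Q" by (rule coprime_iff_gcd_eq_1[symmetric])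
  also have "\<dots> \<longleftrightarrow> coprime (t^5*C) Q" using ct coprime_mult_left_iff by blast
  also have "\<dots> \<longleftrightarrow> coprime ((1+t+t^2)^5) Q" using Qd by (rule coprime_shift)
  also have "\<dots> \<longleftrightarrow> coprime (1+t+t^2) Q" by (simp only: coprime_power_left_iff) simp
  also have "\<dots> \<longleftrightarrow> gcd m (3 * k) = gcd m k" unfolding Q_def t_def
    by (rule B_lemma) (use assms(1) in simp)
  finally have "gcd C Q = 1 \<longleftrightarrow> gcd m (3 * k) = gcd m k" .
  moreover have "Polynomial.monom (1::gf2) m = ?X^m" by (rule mX)
  ultimately show ?thesis by (simp only: C_def Q_def)
qed

end
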